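(* Let $f,g\in\mathbb L^2([0,1])$, let $X$ be distributed according to the model below, and set $\Delta=\|f-g\|$. Then for all $0<\epsilon\le1/8$, \[ \mathbb P_X\Big(\big|\eta(X)-\tfrac12\big|\le\epsilon\Big)\le 1\wedge\frac{10\epsilon}{\Delta}. \]
   Context: Model: $Y\sim\mathrm{Bernoulli}(1/2)$ independent of a standard Brownian motion $W$ on $[0,1]$, and $dX(t)=Yf(t)\,dt+(1-Y)g(t)\,dt+dW(t)$, $t\in[0,1]$. $\mathbb P_X$ is the law of $X$. The regression function is $\eta(X)=\mathbb P(Y=1\mid X)=\dfrac{\exp(\int_0^1(f-g)(s)\,dX_s-\frac12\|f\|^2+\frac12\|g\|^2)}{1+\exp(\int_0^1(f-g)(s)\,dX_s-\frac12\|f\|^2+\frac12\|g\|^2)}$. $\|\cdot\|$ is the $\mathbb L^2([0,1])$ norm, $a\wedge b=\min\{a,b\}$, and $10\epsilon/\Delta=+\infty$ if $\Delta=0$. *)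

theory Defs
  imports "HOL-Probability.Probability"
begin

definition sq_integrable01 :: "(real \<Rightarrow> real) \<Rightarrow> bool" where
  "sq_integrable01 h \<longleftrightarrow> h \<in> borel_measurable lborel \<and>
     set_integrable lborel {0..1} (\<lambda>t. (h t)^2)"

definition norm01 :: "(real \<Rightarrow> real) \<Rightarrow> real" where
  "norm01 h = sqrt (LINT t:{0..1}|lborel. (h t)^2)"

definition partition01 :: "nat \<Rightarrow> (nat \<Rightarrow> real) \<Rightarrow> bool" where
  "partition01 N \<tau> \<longleftrightarrow> 0 < N \<and> \<tau> 0 = 0 \<and> \<tau> N = 1 \<and> (\<forall>i<N. \<tau> i < \<tau> (Suc i))"

definition step_fun :: "nat \<Rightarrow> (nat \<Rightarrow> real) \<Rightarrow> (nat \<Rightarrow> real) \<Rightarrow> real \<Rightarrow> real" where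
  "step_fun N \<tau> c t = (\<Sum>i<N. c i * indicator {\<tau> i..<\<tau> (Suc i)} t)"

definition step_sum :: "(real \<Rightarrow> 'a \<Rightarrow> real) \<Rightarrow> nat \<Rightarrow> (nat \<Rightarrow> real) \<Rightarrow> (nat \<Rightarrow> real) \<Rightarrow> 'a \<Rightarrow> real" where
  "step_sum X N \<tau> c \<omega> = (\<Sum>i<N. c i * (X (\<tau> (Suc i)) \<omega> - X (\<tau> i) \<omega>))"

(* I is (a version of) the Wiener integral  int_0^1 h(s) dX_s  for deterministic h in L^2:
   the limit in probability of the elementary integrals of step functions converging to h in L^2 *)
definition stoch_integral :: "'a measure \<Rightarrow> (real \<Rightarrow> 'a \<Rightarrow> real) \<Rightarrow> (real \<Rightarrow> real) \<Rightarrow> ('a \<Rightarrow> real) \<Rightarrow> bool" where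
  "stoch_integral M X h I \<longleftrightarrow> I \<in> borel_measurable M \<and>
     (\<exists>Ns \<tau>s cs. (\<forall>n. partition01 (Ns n) (\<tau>s n)) \<and>
        (\<lambda>n. LINT t:{0..1}|lborel. (step_fun (Ns n) (\<tau>s n) (cs n) t - h t)^2) \<longlonglongrightarrow> 0 \<and>
        (\<forall>e>0. (\<lambda>n. measure M {\<omega> \<in> space M. \<bar>step_sum X (Ns n) (\<tau>s n) (cs n) \<omega> - I \<omega>\<bar> > e})
                  \<longlonglongrightarrow> 0))"

definition std_BM :: "'a measure \<Rightarrow> (real \<Rightarrow> 'a \<Rightarrow> real) \<Rightarrow> bool" where
  "std_BM M W \<longleftrightarrow> prob_space M \<and>
     (\<forall>\<omega>\<in>space M. W 0 \<omega> = 0 \<and> continuous_on {0..1} (\<lambda>t. W t \<omega>)) \<and>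
     (\<forall>s t. 0 \<le> s \<longrightarrow> s < t \<longrightarrow> t \<le> 1 \<longrightarrow>
        distributed M lborel (\<lambda>\<omega>. W t \<omega> - W s \<omega>) (normal_density 0 (sqrt (t - s)))) \<and>
     (\<forall>n \<tau>. (\<forall>i<n. 0 \<le> \<tau> i \<and> \<tau> i < \<tau> (Suc i) \<and> \<tau> (Suc i) \<le> 1) \<longrightarrow>
        prob_space.indep_vars M (\<lambda>_. borel) (\<lambda>i \<omega>. W (\<tau> (Suc i)) \<omega> - W (\<tau> i) \<omega>) {..<n})"

(* the random variable Y is independent of the process W = (W t) on [0,1]
   (independence of the generated sigma-algebras; same content as prob_space.indep_var,
    which however requires both variables to have the same codomain type) *)
definition indep_rv_process :: "'a measure \<Rightarrow> ('a \<Rightarrow> real) \<Rightarrow> (real \<Rightarrow> 'a \<Rightarrow> real) \<Rightarrow> bool" where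
  "indep_rv_process M Y W \<longleftrightarrow>
     Y \<in> borel_measurable M \<and>
     (\<lambda>\<omega>. \<lambda>t\<in>{0..1}. W t \<omega>) \<in> measurable M (Pi\<^sub>M {0..1} (\<lambda>_. borel)) \<and>
     prob_space.indep_set M
       (sigma_sets (space M) {Y -` A \<inter> space M | A. A \<in> sets borel})
       (sigma_sets (space M) {(\<lambda>\<omega>. \<lambda>t\<in>{0..1}. W t \<omega>) -` B \<inter> space M | B. B \<in> sets (Pi\<^sub>M {0..1} (\<lambda>_. borel))})"

(* regression function eta(X), given I = int_0^1 (f-g)(s) dX_s *)
definition eta :: "(real \<Rightarrow> real) \<Rightarrow> (real \<Rightarrow> real) \<Rightarrow> ('a \<Rightarrow> real) \<Rightarrow> 'a \<Rightarrow> real" where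
  "eta f g I \<omega> = (let z = I \<omega> - (norm01 f)^2 / 2 + (norm01 g)^2 / 2 in exp z / (1 + exp z))"

end

theory Submission
  imports Defs
begin


lemma part_mono:
  assumes "partition01 N \<tau>" "i \<le> j" "j \<le> N" shows "\<tau> i \<le> \<tau> j"
  using assms(2,3)
proof (induction j)
  case 0 thus ?case by simp
next
  case (Suc j)
  show ?case
  proof (cases "i = Suc j")
    case True thus ?thesis by simp
  next
    case False
    then have "\<tau> i \<le> \<tau> j" using Suc by auto
    moreover have "\<tau> j < \<tau> (Suc j)" using assms(1) Suc.prems unfolding partition01_def by auto
    ultimately show ?thesis by simp
  qed
qed

lemma part_range:
  assumes "partition01 N \<tau>" "i \<le> N" shows "0 \<le> \<tau> i" "\<tau> i \<le> 1"
  using part_mono[OF assms(1), of 0 i] part_mono[OF assms(1), of i N] assms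
  unfolding partition01_def by auto

lemma part_disj:
  assumes "partition01 N \<tau>" "i < N" "j < N" "i \<noteq> j" "t \<in> {\<tau> i..<\<tau> (Suc i)}"
  shows "t \<notin> {\<tau> j..<\<tau> (Suc j)}"
proof (cases "i < j")
  case True
  then have "\<tau> (Suc i) \<le> \<tau> j" using part_mono[OF assms(1), of "Suc i" j] assms by auto
  then show ?thesis using assms by auto
next
  case False
  then have "\<tau> (Suc j) \<le> \<tau> i" using part_mono[OF assms(1), of "Suc j" i] assms by auto
  then show ?thesis using assms by auto
qed

lemma step_sq:
  assumes "partition01 N \<tau>"
  shows "(step_fun N \<tau> c t)\<^sup>2 = (\<Sum>i<N. (c i)\<^sup>2 * indicator {\<tau> i..<\<tau> (Suc i)} t)"
proof (cases "\<exists>i<N. t \<in> {\<tau> i..<\<tau> (Suc i)}")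
  case True
  then obtain i0 where i0: "i0 < N" "t \<in> {\<tau> i0..<\<tau> (Suc i0)}" by blast
  have oth: "indicator {\<tau> j..<\<tau> (Suc j)} t = (0::real)" if "j \<in> {..<N} - {i0}" for j
    using part_disj[OF assms i0(1), of j t] that i0 by (auto simp: indicator_def)
  have "step_fun N \<tau> c t = c i0 * indicator {\<tau> i0..<\<tau> (Suc i0)} t
      + (\<Sum>j\<in>{..<N} - {i0}. c j * indicator {\<tau> j..<\<tau> (Suc j)} t)"
    unfolding step_fun_def using i0 by (intro sum.remove) auto
  also have "\<dots> = c i0" using oth i0 by simp
  finally have 1: "step_fun N \<tau> c t = c i0" .
  have "(\<Sum>i<N. (c i)\<^sup>2 * indicator {\<tau> i..<\<tau> (Suc i)} t) = (c i0)\<^sup>2 * indicator {\<tau> i0..<\<tau> (Suc i0)} t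
      + (\<Sum>j\<in>{..<N} - {i0}. (c j)\<^sup>2 * indicator {\<tau> j..<\<tau> (Suc j)} t)"
    using i0 by (intro sum.remove) auto
  also have "\<dots> = (c i0)\<^sup>2" using oth i0 by simp
  finally show ?thesis using 1 by simp
next
  case False
  then have z: "\<And>i. i < N \<Longrightarrow> indicator {\<tau> i..<\<tau> (Suc i)} t = (0::real)"
    by (auto simp: indicator_def)
  show ?thesis by (simp add: step_fun_def z)
qed

lemma step_int:
  assumes "partition01 N \<tau>"
  shows "set_integrable lborel {0..1} (\<lambda>t. \<Sum>i<N. (c i)\<^sup>2 * indicator {\<tau> i..<\<tau> (Suc i)} t)"
    "(LINT t:{0..1}|lborel. (\<Sum>i<N. (c i)\<^sup>2 * indicator {\<tau> i..<\<tau> (Suc i)} t))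
       = (\<Sum>i<N. (c i)\<^sup>2 * (\<tau> (Suc i) - \<tau> i))"
proof -
  let ?F = "\<lambda>t. \<Sum>i<N. (c i)\<^sup>2 * indicator {\<tau> i..<\<tau> (Suc i)} t :: real"
  have sub: "{\<tau> i..<\<tau> (Suc i)} \<subseteq> {0..1}" if "i < N" for i
    using part_range[OF assms, of i] part_range[OF assms, of "Suc i"] that by auto
  have eq: "(\<lambda>t. indicator {0..1} t *\<^sub>R ?F t) = ?F"
  proof
    fix t show "indicator {0..1} t *\<^sub>R ?F t = ?F t"
    proof (cases "t \<in> {0..1}")
      case False
      then have "indicator {\<tau> i..<\<tau> (Suc i)} t = (0::real)" if "i < N" for i
        using sub[OF that] by (auto simp: indicator_def)
      then show ?thesis using False by simp
    qed simp
  qed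
  have lt: "\<tau> i < \<tau> (Suc i)" if "i < N" for i using assms that unfolding partition01_def by auto
  have int: "integrable lborel ?F"
    by (intro Bochner_Integration.integrable_sum integrable_mult_right integrable_real_indicator)
       (auto simp: lt less_imp_le)
  show "set_integrable lborel {0..1} ?F" unfolding set_integrable_def eq by (rule int)
  show "(LINT t:{0..1}|lborel. ?F t) = (\<Sum>i<N. (c i)\<^sup>2 * (\<tau> (Suc i) - \<tau> i))"
    unfolding set_lebesgue_integral_def eq
    apply (subst Bochner_Integration.integral_sum)
    subgoal using int by (intro integrable_mult_right integrable_real_indicator) (auto simp: lt less_imp_le)
    apply (intro sum.cong refl)
    apply (simp add: lt less_imp_le)
    done
qed



lemma sq_nonneg_int: "0 \<le> (LINT t:S|lborel. ((a t)::real)\<^sup>2)"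
  unfolding set_lebesgue_integral_def by (rule Bochner_Integration.integral_nonneg) simp

lemma sq_add_integrable:
  fixes a b :: "real \<Rightarrow> real"
  assumes [measurable]: "a \<in> borel_measurable lborel" "b \<in> borel_measurable lborel"
    and ia: "set_integrable lborel S (\<lambda>t. (a t)\<^sup>2)" and ib: "set_integrable lborel S (\<lambda>t. (b t)\<^sup>2)"
    and [measurable]: "S \<in> sets lborel"
  shows "set_integrable lborel S (\<lambda>t. (a t + b t)\<^sup>2)"
proof (rule set_integrable_bound[where f = "\<lambda>t. 2 * (a t)\<^sup>2 + 2 * (b t)\<^sup>2"])
  show "set_integrable lborel S (\<lambda>t. 2 * (a t)\<^sup>2 + 2 * (b t)\<^sup>2)"
    using ia ib by (intro set_integral_add set_integrable_mult_right) auto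
  show "set_borel_measurable lborel S (\<lambda>t. (a t + b t)\<^sup>2)"
    unfolding set_borel_measurable_def by measurable
  have "(x + y)\<^sup>2 \<le> 2 * x\<^sup>2 + 2 * y\<^sup>2" for x y :: real
    using sum_squares_ge_zero[of "x - y" 0] by (simp add: power2_eq_square algebra_simps)
  then show "AE x in lborel. x \<in> S \<longrightarrow> norm ((a x + b x)\<^sup>2) \<le> norm (2 * (a x)\<^sup>2 + 2 * (b x)\<^sup>2)"
    by auto
qed

lemma real_tri_aux:
  fixes X A B :: real
  assumes "0 \<le> A" "0 \<le> B" "\<And>t. t > 0 \<Longrightarrow> X \<le> (1 + t) * A\<^sup>2 + (1 + 1 / t) * B\<^sup>2"
  shows "X \<le> (A + B)\<^sup>2"
proof (cases "A > 0 \<and> B > 0")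
  case True
  have "X \<le> (1 + B / A) * A\<^sup>2 + (1 + 1 / (B / A)) * B\<^sup>2" using assms(3)[of "B / A"] True by simp
  also have "\<dots> = (A + B)\<^sup>2" using True by (simp add: field_simps power2_eq_square)
  finally show ?thesis .
next
  case False
  show ?thesis
  proof (rule ccontr)
    assume neg: "\<not> X \<le> (A + B)\<^sup>2"
    show False
    proof (cases "A = 0")
      case True
      show False
      proof (cases "B = 0")
        case True
        then show False using assms(3)[of 1] neg \<open>A = 0\<close> by simp
      next
        case False
        then have Bp: "B > 0" using assms by simp
        define t where "t = 2 * B\<^sup>2 / (X - B\<^sup>2)"
        have d: "X - B\<^sup>2 > 0" using neg True by simp
        have tp: "t > 0" using d Bp by (simp add: t_def)
        have "X \<le> (1 + 1 / t) * B\<^sup>2" using assms(3)[OF tp] True by simp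
        also have "\<dots> = B\<^sup>2 + (X - B\<^sup>2) / 2" using d Bp by (simp add: t_def field_simps)
        finally show False using d by (simp add: field_simps)
      qed
    next
      case False
      then have Ap: "A > 0" using assms by simp
      then have B0: "B = 0" using \<open>\<not> (A > 0 \<and> B > 0)\<close> assms by simp
      define t where "t = (X - A\<^sup>2) / (2 * A\<^sup>2)"
      have d: "X - A\<^sup>2 > 0" using neg B0 by simp
      have tp: "t > 0" using d Ap by (simp add: t_def)
      have "X \<le> (1 + t) * A\<^sup>2" using assms(3)[OF tp] B0 by simp
      also have "\<dots> = A\<^sup>2 + (X - A\<^sup>2) / 2" using d Ap by (simp add: t_def field_simps)
      finally show False using d by (simp add: field_simps)
    qed
  qed
qed

lemma L2_triangle:
  fixes a b :: "real \<Rightarrow> real"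
  assumes [measurable]: "a \<in> borel_measurable lborel" "b \<in> borel_measurable lborel"
    and ia: "set_integrable lborel S (\<lambda>t. (a t)\<^sup>2)" and ib: "set_integrable lborel S (\<lambda>t. (b t)\<^sup>2)"
    and [measurable]: "S \<in> sets lborel"
  shows "sqrt (LINT t:S|lborel. (a t + b t)\<^sup>2) \<le> sqrt (LINT t:S|lborel. (a t)\<^sup>2) + sqrt (LINT t:S|lborel. (b t)\<^sup>2)"
proof -
  define IA where "IA = (LINT t:S|lborel. (a t)\<^sup>2)"
  define IB where "IB = (LINT t:S|lborel. (b t)\<^sup>2)"
  have IA0: "IA \<ge> 0" and IB0: "IB \<ge> 0" unfolding IA_def IB_def by (rule sq_nonneg_int)+
  have iab: "set_integrable lborel S (\<lambda>t. (a t + b t)\<^sup>2)" by (rule sq_add_integrable) (use ia ib assms(5) in auto)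
  have "(LINT t:S|lborel. (a t + b t)\<^sup>2) \<le> (sqrt IA + sqrt IB)\<^sup>2"
  proof (rule real_tri_aux)
    fix t :: real assume tp: "t > 0"
    have pw: "(x + y)\<^sup>2 \<le> (1 + t) * x\<^sup>2 + (1 + 1 / t) * y\<^sup>2" for x y :: real
    proof -
      have "0 \<le> (t * x - y)\<^sup>2 / t" using tp by simp
      also have "(t * x - y)\<^sup>2 / t = (1 + t) * x\<^sup>2 + (1 + 1 / t) * y\<^sup>2 - (x + y)\<^sup>2"
        using tp by (simp add: field_simps power2_eq_square)
      finally show ?thesis by simp
    qed
    have "(LINT s:S|lborel. (a s + b s)\<^sup>2) \<le> (LINT s:S|lborel. (1 + t) * (a s)\<^sup>2 + (1 + 1 / t) * (b s)\<^sup>2)"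
      using ia ib iab pw by (intro set_integral_mono) auto
    also have "\<dots> = (1 + t) * IA + (1 + 1 / t) * IB"
      using ia ib unfolding IA_def IB_def by (subst set_integral_add(2)) auto
    finally show "(LINT s:S|lborel. (a s + b s)\<^sup>2) \<le> (1 + t) * (sqrt IA)\<^sup>2 + (1 + 1 / t) * (sqrt IB)\<^sup>2"
      using IA0 IB0 by simp
  qed (use IA0 IB0 in auto)
  then show ?thesis unfolding IA_def[symmetric] IB_def[symmetric]
    using IA0 IB0 real_sqrt_le_mono by fastforce
qed



lemma normal_interval:
  assumes P: "prob_space M" and D: "distributed M lborel G (normal_density \<mu> \<sigma>)"
    and sp: "\<sigma> > 0" and ab: "a \<le> b"
  shows "measure M {\<omega> \<in> space M. G \<omega> \<in> {a..b}} \<le> (b - a) / (\<sigma> * sqrt (2 * pi))"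
proof -
  interpret prob_space M by (rule P)
  define C where "C = 1 / (\<sigma> * sqrt (2 * pi))"
  have C0: "C \<ge> 0" using sp by (simp add: C_def)
  have nb: "normal_density \<mu> \<sigma> x \<le> C" for x
  proof -
    have "sqrt (2 * pi * \<sigma>\<^sup>2) = \<sigma> * sqrt (2 * pi)" using sp
      by (simp add: real_sqrt_mult)
    then have "normal_density \<mu> \<sigma> x = C * exp (-(x - \<mu>)\<^sup>2/ (2 * \<sigma>\<^sup>2))"
      by (simp add: normal_density_def C_def)
    also have "\<dots> \<le> C * 1" using C0 by (intro mult_left_mono) auto
    finally show ?thesis by simp
  qed
  have eqset: "{\<omega> \<in> space M. G \<omega> \<in> {a..b}} = G -` {a..b} \<inter> space M" by auto
  have "emeasure M {\<omega> \<in> space M. G \<omega> \<in> {a..b}} = (\<integral>\<^sup>+x. ennreal (normal_density \<mu> \<sigma> x) * indicator {a..b} x \<partial>lborel)"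
    unfolding eqset by (rule distributed_emeasure[OF D]) simp
  also have "\<dots> \<le> (\<integral>\<^sup>+x. ennreal C * indicator {a..b} x \<partial>lborel)"
    by (intro nn_integral_mono mult_right_mono ennreal_leI) (auto simp: nb)
  also have "\<dots> = ennreal C * emeasure lborel {a..b}" by (rule nn_integral_cmult_indicator) simp
  also have "\<dots> = ennreal (C * (b - a))" using ab C0 by (simp add: ennreal_mult)
  finally have "ennreal (measure M {\<omega> \<in> space M. G \<omega> \<in> {a..b}}) \<le> ennreal (C * (b - a))"
    by (simp add: emeasure_eq_measure)
  then have "measure M {\<omega> \<in> space M. G \<omega> \<in> {a..b}} \<le> C * (b - a)"
    using ab C0 by (simp add: ennreal_le_iff)
  then show ?thesis by (simp add: C_def)
qed

lemma gauss_sum: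
  assumes BM: "std_BM M W" and PT: "partition01 N \<tau>" and Sne: "{i. i < N \<and> c i \<noteq> 0} \<noteq> {}"
  shows "distributed M lborel (\<lambda>\<omega>. \<Sum>i\<in>{i. i < N \<and> c i \<noteq> 0}. c i * (W (\<tau> (Suc i)) \<omega> - W (\<tau> i) \<omega>))
           (normal_density 0 (sqrt (\<Sum>i<N. (c i)\<^sup>2 * (\<tau> (Suc i) - \<tau> i))))"
proof -
  have P: "prob_space M" using BM by (simp add: std_BM_def)
  interpret prob_space M by (rule P)
  define S where "S = {i. i < N \<and> c i \<noteq> 0}"
  define D where "D = (\<lambda>i \<omega>. W (\<tau> (Suc i)) \<omega> - W (\<tau> i) \<omega>)"
  have lt: "\<tau> i < \<tau> (Suc i)" if "i < N" for i using PT that unfolding partition01_def by auto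
  have rng: "0 \<le> \<tau> i" "\<tau> (Suc i) \<le> 1" if "i < N" for i
    using part_range[OF PT, of i] part_range[OF PT, of "Suc i"] that by auto
  have ind0: "indep_vars (\<lambda>_. borel) D {..<N}"
    using BM lt rng unfolding std_BM_def D_def by blast
  have ind1: "indep_vars (\<lambda>_. borel) (\<lambda>i x. c i * D i x) {..<N}"
    using indep_vars_compose2[OF ind0, of "\<lambda>i x. c i * x" "\<lambda>_. borel"] by simp
  have ind: "indep_vars (\<lambda>_. borel) (\<lambda>i x. c i * D i x) S"
    by (rule indep_vars_subset[OF ind1]) (auto simp: S_def)
  have dD: "distributed M lborel (D i) (normal_density 0 (sqrt (\<tau> (Suc i) - \<tau> i)))" if "i < N" for i
    using BM lt[OF that] rng[OF that] unfolding std_BM_def D_def by auto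
  have dcD: "distributed M lborel (\<lambda>x. c i * D i x) (normal_density 0 (\<bar>c i\<bar> * sqrt (\<tau> (Suc i) - \<tau> i)))"
    if "i \<in> S" for i
  proof -
    have i: "i < N" "c i \<noteq> 0" using that by (auto simp: S_def)
    have "distributed M lborel (\<lambda>x. 0 + c i * D i x) (normal_density (0 + c i * 0) (\<bar>c i\<bar> * sqrt (\<tau> (Suc i) - \<tau> i)))"
      by (rule normal_density_affine[OF dD[OF i(1)]]) (use i lt in auto)
    then show ?thesis by simp
  qed
  have "distributed M lborel (\<lambda>x. \<Sum>i\<in>S. c i * D i x)
      (normal_density (\<Sum>i\<in>S. 0) (sqrt (\<Sum>i\<in>S. (\<bar>c i\<bar> * sqrt (\<tau> (Suc i) - \<tau> i))\<^sup>2)))"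
    by (rule sum_indep_normal[OF _ _ ind _ dcD]) (use Sne lt in \<open>auto simp: S_def\<close>)
  moreover have "(\<Sum>i\<in>S. (\<bar>c i\<bar> * sqrt (\<tau> (Suc i) - \<tau> i))\<^sup>2) = (\<Sum>i<N. (c i)\<^sup>2 * (\<tau> (Suc i) - \<tau> i))"
  proof -
    have "(\<Sum>i\<in>S. (\<bar>c i\<bar> * sqrt (\<tau> (Suc i) - \<tau> i))\<^sup>2) = (\<Sum>i\<in>S. (c i)\<^sup>2 * (\<tau> (Suc i) - \<tau> i))"
      using lt by (intro sum.cong refl) (auto simp: S_def power_mult_distrib less_imp_le)
    also have "\<dots> = (\<Sum>i<N. (c i)\<^sup>2 * (\<tau> (Suc i) - \<tau> i))"
      by (rule sum.mono_neutral_left) (auto simp: S_def)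
    finally show ?thesis .
  qed
  ultimately show ?thesis unfolding S_def D_def by simp
qed



lemma logit_bound:
  fixes z \<epsilon> :: real
  assumes e: "0 < \<epsilon>" "\<epsilon> \<le> 1/8" and h: "\<bar>exp z / (1 + exp z) - 1/2\<bar> \<le> \<epsilon>"
  shows "\<bar>z\<bar> \<le> 6 * \<epsilon>"
proof (rule ccontr)
  assume "\<not> \<bar>z\<bar> \<le> 6 * \<epsilon>"
  then consider "z > 6 * \<epsilon>" | "z < - 6 * \<epsilon>" by linarith
  then show False
  proof cases
    case 1
    have "exp z \<ge> 1 + z" by (rule exp_ge_add_one_self)
    then have E: "exp z > 1 + 6 * \<epsilon>" using 1 by linarith
    have q: "(1 + 6 * \<epsilon>) * (1 - 2 * \<epsilon>) \<ge> 1 + 2 * \<epsilon>" using e by (simp add: algebra_simps power2_eq_square)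
    have "exp z * (1 - 2 * \<epsilon>) > (1 + 6 * \<epsilon>) * (1 - 2 * \<epsilon>)" using E e by (intro mult_strict_right_mono) auto
    then have ineq: "exp z * (1 - 2 * \<epsilon>) > 1 + 2 * \<epsilon>" using q by simp
    then have "exp z / (1 + exp z) - 1/2 > \<epsilon>"
    proof -
      have pos: "1 + exp z > 0" by (simp add: add_pos_pos)
      show ?thesis using ineq pos by (simp add: field_simps)
    qed 
    then show False using h by simp
  next
    case 2
    have "exp (-z) \<ge> 1 + (-z)" by (rule exp_ge_add_one_self)
    then have E: "exp (-z) > 1 + 6 * \<epsilon>" using 2 by simp
    have ez: "exp z * exp (-z) = 1" by (simp add: exp_minus)
    have q: "(1 + 6 * \<epsilon>) * (1 - 2 * \<epsilon>) \<ge> 1 + 2 * \<epsilon>" using e by (simp add: algebra_simps power2_eq_square)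
    have "exp z * (1 + 6 * \<epsilon>) < exp z * exp (-z)" using E by simp
    then have E2: "exp z * (1 + 6 * \<epsilon>) < 1" using ez by simp
    have "exp z * (1 + 2 * \<epsilon>) * (1 + 6 * \<epsilon>) < (1 - 2 * \<epsilon>) * (1 + 6 * \<epsilon>)"
    proof -
      have "exp z * (1 + 2 * \<epsilon>) * (1 + 6 * \<epsilon>) = (exp z * (1 + 6 * \<epsilon>)) * (1 + 2 * \<epsilon>)" by simp
      also have "\<dots> < 1 * (1 + 2 * \<epsilon>)" using E2 e by (intro mult_strict_right_mono) auto
      finally show ?thesis using q by (simp add: algebra_simps)
    qed
    then have ineq: "exp z * (1 + 2 * \<epsilon>) < 1 - 2 * \<epsilon>" using e
      by (smt (verit) mult_le_cancel_right)
    then have "exp z / (1 + exp z) - 1/2 < - \<epsilon>"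
    proof -
      have pos: "1 + exp z > 0" by (simp add: add_pos_pos)
      show ?thesis using ineq pos by (simp add: field_simps)
    qed
    then show False using h by simp
  qed
qed



lemma per_n_bound:
  fixes M :: "'a measure" and Y :: "'a \<Rightarrow> real" and W :: "real \<Rightarrow> 'a \<Rightarrow> real"
    and f g :: "real \<Rightarrow> real" and X :: "real \<Rightarrow> 'a \<Rightarrow> real" and I :: "'a \<Rightarrow> real"
  assumes P: "prob_space M" and BM: "std_BM M W"
    and Ym[measurable]: "Y \<in> borel_measurable M" and Y01: "\<forall>\<omega>\<in>space M. Y \<omega> \<in> {0, 1}"
    and Xdef: "X = (\<lambda>t \<omega>. Y \<omega> * (LINT s:{0..t}|lborel. f s) + (1 - Y \<omega>) * (LINT s:{0..t}|lborel. g s) + W t \<omega>)"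
    and Im[measurable]: "I \<in> borel_measurable M"
    and PT: "partition01 N \<tau>" and e: "0 < \<epsilon>" "\<epsilon> \<le> 1/8"
    and sp: "sqrt (\<Sum>i<N. (c i)\<^sup>2 * (\<tau> (Suc i) - \<tau> i)) > 0"
  shows "measure M {\<omega> \<in> space M. \<bar>eta f g I \<omega> - 1/2\<bar> \<le> \<epsilon>}
     \<le> 10 * \<epsilon> / sqrt (\<Sum>i<N. (c i)\<^sup>2 * (\<tau> (Suc i) - \<tau> i))
       + measure M {\<omega> \<in> space M. \<bar>step_sum X N \<tau> c \<omega> - I \<omega>\<bar> > \<epsilon> / 4}"
proof -
  interpret prob_space M by (rule P)
  define \<sigma> where "\<sigma> = sqrt (\<Sum>i<N. (c i)\<^sup>2 * (\<tau> (Suc i) - \<tau> i))"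
  define Fv where "Fv = (\<lambda>t. LINT s:{0..t}|lborel. f s)"
  define Gv where "Gv = (\<lambda>t. LINT s:{0..t}|lborel. g s)"
  define A where "A = (\<Sum>i<N. c i * (Fv (\<tau> (Suc i)) - Fv (\<tau> i)))"
  define B where "B = (\<Sum>i<N. c i * (Gv (\<tau> (Suc i)) - Gv (\<tau> i)))"
  define S where "S = {i. i < N \<and> c i \<noteq> 0}"
  define G where "G = (\<lambda>\<omega>. \<Sum>i\<in>S. c i * (W (\<tau> (Suc i)) \<omega> - W (\<tau> i) \<omega>))"
  define k where "k = - (norm01 f)\<^sup>2 / 2 + (norm01 g)\<^sup>2 / 2"
  define r where "r = 6 * \<epsilon> + \<epsilon> / 4"
  define a where "a = step_sum X N \<tau> c"
  have sp': "\<sigma> > 0" using sp by (simp add: \<sigma>_def)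
  have Sne: "S \<noteq> {}"
  proof
    assume "S = {}"
    then have "\<And>i. i < N \<Longrightarrow> c i = 0" by (auto simp: S_def)
    then have "(\<Sum>i<N. (c i)\<^sup>2 * (\<tau> (Suc i) - \<tau> i)) = 0" by simp
    then show False using sp by simp
  qed
  have dG: "distributed M lborel G (normal_density 0 \<sigma>)"
    unfolding G_def \<sigma>_def S_def by (rule gauss_sum[OF BM PT]) (use Sne in \<open>simp add: S_def\<close>)
  have Gm[measurable]: "G \<in> borel_measurable M"
    using distributed_measurable[OF dG] by simp
  have dec: "a \<omega> = Y \<omega> * A + (1 - Y \<omega>) * B + G \<omega>" for \<omega>
  proof -
    have "a \<omega> = Y \<omega> * A + (1 - Y \<omega>) * B + (\<Sum>i<N. c i * (W (\<tau> (Suc i)) \<omega> - W (\<tau> i) \<omega>))"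
      unfolding a_def step_sum_def Xdef A_def B_def Fv_def Gv_def
      by (simp add: algebra_simps sum.distrib sum_distrib_left sum_subtractf)
    also have "(\<Sum>i<N. c i * (W (\<tau> (Suc i)) \<omega> - W (\<tau> i) \<omega>)) = G \<omega>"
      unfolding G_def by (rule sum.mono_neutral_right) (auto simp: S_def)
    finally show ?thesis .
  qed
  have am[measurable]: "a \<in> borel_measurable M"
  proof -
    have "a = (\<lambda>\<omega>. Y \<omega> * A + (1 - Y \<omega>) * B + G \<omega>)" using dec by (intro ext) simp
    also have "\<dots> \<in> borel_measurable M" by measurable
    finally show ?thesis .
  qed
  define E1 where "E1 = {\<omega> \<in> space M. G \<omega> \<in> {- r - A - k .. r - A - k}}"
  define E2 where "E2 = {\<omega> \<in> space M. G \<omega> \<in> {- r - B - k .. r - B - k}}"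
  define E3 where "E3 = {\<omega> \<in> space M. \<bar>a \<omega> - I \<omega>\<bar> > \<epsilon> / 4}"
  have [measurable]: "E1 \<in> sets M" "E2 \<in> sets M" "E3 \<in> sets M"
    unfolding E1_def E2_def E3_def by measurable
  have sub: "{\<omega> \<in> space M. \<bar>eta f g I \<omega> - 1/2\<bar> \<le> \<epsilon>} \<subseteq> E1 \<union> E2 \<union> E3"
  proof
    fix \<omega> assume \<omega>: "\<omega> \<in> {\<omega> \<in> space M. \<bar>eta f g I \<omega> - 1/2\<bar> \<le> \<epsilon>}"
    have "eta f g I \<omega> = exp (I \<omega> + k) / (1 + exp (I \<omega> + k))"
      unfolding eta_def k_def Let_def by (simp add: algebra_simps)
    then have zb: "\<bar>I \<omega> + k\<bar> \<le> 6 * \<epsilon>" using logit_bound[OF e, of "I \<omega> + k"] \<omega> by simp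
    show "\<omega> \<in> E1 \<union> E2 \<union> E3"
    proof (cases "\<bar>a \<omega> - I \<omega>\<bar> > \<epsilon> / 4")
      case True then show ?thesis using \<omega> by (simp add: E3_def)
    next
      case False
      then have ab: "\<bar>a \<omega> + k\<bar> \<le> r" using zb unfolding r_def by linarith
      have "Y \<omega> = 1 \<or> Y \<omega> = 0" using Y01 \<omega> by auto
      then show ?thesis
      proof
        assume "Y \<omega> = 1"
        then have "a \<omega> = A + G \<omega>" using dec by simp
        then show ?thesis using ab \<omega> unfolding E1_def by auto
      next
        assume "Y \<omega> = 0"
        then have "a \<omega> = B + G \<omega>" using dec by simp
        then show ?thesis using ab \<omega> unfolding E2_def by auto
      qed
    qed
  qed
  have r0: "r \<ge> 0" using e by (simp add: r_def)
  have b1: "measure M E1 \<le> (2 * r) / (\<sigma> * sqrt (2 * pi))"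
    using normal_interval[OF P dG sp', of "- r - A - k" "r - A - k"] r0 unfolding E1_def by simp
  have b2: "measure M E2 \<le> (2 * r) / (\<sigma> * sqrt (2 * pi))"
    using normal_interval[OF P dG sp', of "- r - B - k" "r - B - k"] r0 unfolding E2_def by simp
  have pi25: "sqrt (2 * pi) \<ge> 5 / 2"
  proof -
    have "(5 / 2 :: real) = sqrt ((5/2)\<^sup>2)" by simp
    also have "\<dots> \<le> sqrt (2 * pi)" using pi_approx(1) by (intro real_sqrt_le_mono) (simp add: power2_eq_square)
    finally show ?thesis .
  qed
  have b12: "(2 * r) / (\<sigma> * sqrt (2 * pi)) \<le> 5 * \<epsilon> / \<sigma>"
  proof -
    have "(2 * r) / (\<sigma> * sqrt (2 * pi)) = ((2 * r) / sqrt (2 * pi)) / \<sigma>" by simp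
    also have "\<dots> \<le> (5 * \<epsilon>) / \<sigma>"
    proof (intro divide_right_mono)
      have "(2 * r) / sqrt (2 * pi) \<le> (2 * r) / (5 / 2)"
        using pi25 r0 by (intro divide_left_mono) auto
      also have "\<dots> = 5 * \<epsilon>" by (simp add: r_def)
      finally show "(2 * r) / sqrt (2 * pi) \<le> 5 * \<epsilon>" .
    qed (use sp' in auto)
    finally show ?thesis .
  qed
  have "measure M {\<omega> \<in> space M. \<bar>eta f g I \<omega> - 1/2\<bar> \<le> \<epsilon>} \<le> measure M (E1 \<union> E2 \<union> E3)"
    by (rule finite_measure_mono[OF sub]) simp
  also have "\<dots> \<le> measure M (E1 \<union> E2) + measure M E3" by (rule measure_Un_le) auto
  also have "\<dots> \<le> measure M E1 + measure M E2 + measure M E3"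
    using measure_Un_le[of E1 M E2] by simp
  also have "\<dots> \<le> 5 * \<epsilon> / \<sigma> + 5 * \<epsilon> / \<sigma> + measure M E3" using b1 b2 b12 by simp
  also have "\<dots> = 10 * \<epsilon> / \<sigma> + measure M E3" by simp
  finally show ?thesis unfolding \<sigma>_def E3_def a_def .
qed



theorem proposition1:
  fixes M :: "'a measure" and Y :: "'a \<Rightarrow> real" and W :: "real \<Rightarrow> 'a \<Rightarrow> real"
    and f g :: "real \<Rightarrow> real" and X :: "real \<Rightarrow> 'a \<Rightarrow> real" and I :: "'a \<Rightarrow> real"
    and \<epsilon> :: real
  assumes "prob_space M"
    and "sq_integrable01 f" and "sq_integrable01 g"
    and "std_BM M W"
    and "Y \<in> borel_measurable M" and "\<forall>\<omega>\<in>space M. Y \<omega> \<in> {0, 1}"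
    and "measure M {\<omega> \<in> space M. Y \<omega> = 1} = 1/2"
    and "indep_rv_process M Y W"
    and "X = (\<lambda>t \<omega>. Y \<omega> * (LINT s:{0..t}|lborel. f s) + (1 - Y \<omega>) * (LINT s:{0..t}|lborel. g s) + W t \<omega>)"
    and "stoch_integral M X (\<lambda>t. f t - g t) I"
    and "0 < \<epsilon>" and "\<epsilon> \<le> 1/8"
  shows "measure M {\<omega> \<in> space M. \<bar>eta f g I \<omega> - 1/2\<bar> \<le> \<epsilon>}
           \<le> (if norm01 (\<lambda>t. f t - g t) = 0 then 1 else min 1 (10 * \<epsilon> / norm01 (\<lambda>t. f t - g t)))"
proof -
  interpret prob_space M by (rule assms(1))
  define h where "h = (\<lambda>t. f t - g t)"
  define \<Delta> where "\<Delta> = norm01 h"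
  let ?E = "{\<omega> \<in> space M. \<bar>eta f g I \<omega> - 1/2\<bar> \<le> \<epsilon>}"
  have le1: "measure M ?E \<le> 1" by (rule prob_le_1)
  have \<Delta>0: "\<Delta> \<ge> 0" by (simp add: \<Delta>_def norm01_def sq_nonneg_int)
  have goal: "?thesis \<longleftrightarrow> measure M ?E \<le> (if \<Delta> = 0 then 1 else min 1 (10 * \<epsilon> / \<Delta>))"
    by (simp add: \<Delta>_def h_def)
  show ?thesis
  proof (cases "\<Delta> = 0")
    case True then show ?thesis using goal le1 by simp
  next
    case False
    then have \<Delta>p: "\<Delta> > 0" using \<Delta>0 by simp
    have fm[measurable]: "f \<in> borel_measurable lborel" and fi: "set_integrable lborel {0..1} (\<lambda>t. (f t)\<^sup>2)"
      using assms(2) by (auto simp: sq_integrable01_def)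
    have gm[measurable]: "g \<in> borel_measurable lborel" and gi: "set_integrable lborel {0..1} (\<lambda>t. (g t)\<^sup>2)"
      using assms(3) by (auto simp: sq_integrable01_def)
    have hm[measurable]: "h \<in> borel_measurable lborel" unfolding h_def by measurable
    have hi: "set_integrable lborel {0..1} (\<lambda>t. (h t)\<^sup>2)"
      using sq_add_integrable[OF fm, of "\<lambda>t. - g t" "{0..1}"] fi gi unfolding h_def by simp
    obtain Ns \<tau>s cs where Im[measurable]: "I \<in> borel_measurable M"
      and part: "\<And>n. partition01 (Ns n) (\<tau>s n)"
      and conv: "(\<lambda>n. LINT t:{0..1}|lborel. (step_fun (Ns n) (\<tau>s n) (cs n) t - h t)\<^sup>2) \<longlonglongrightarrow> 0"
      and pconv: "\<And>e. e > 0 \<Longrightarrow> (\<lambda>n. measure M {\<omega> \<in> space M. \<bar>step_sum X (Ns n) (\<tau>s n) (cs n) \<omega> - I \<omega>\<bar> > e}) \<longlonglongrightarrow> 0"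
      using assms(10) unfolding stoch_integral_def h_def by blast
    define s where "s = (\<lambda>n. step_fun (Ns n) (\<tau>s n) (cs n))"
    define V where "V = (\<lambda>n. \<Sum>i<Ns n. (cs n i)\<^sup>2 * (\<tau>s n (Suc i) - \<tau>s n i))"
    define \<sigma> where "\<sigma> = (\<lambda>n. sqrt (V n))"
    define r where "r = (\<lambda>n. sqrt (LINT t:{0..1}|lborel. (s n t - h t)\<^sup>2))"
    have sm[measurable]: "s n \<in> borel_measurable lborel" for n
      unfolding s_def step_fun_def by measurable
    have ssq: "(\<lambda>t. (s n t)\<^sup>2) = (\<lambda>t. \<Sum>i<Ns n. (cs n i)\<^sup>2 * indicator {\<tau>s n i..<\<tau>s n (Suc i)} t)" for n
      unfolding s_def using step_sq[OF part] by (intro ext) simp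
    have si: "set_integrable lborel {0..1} (\<lambda>t. (s n t)\<^sup>2)" for n
      unfolding ssq by (rule step_int(1)[OF part])
    have sint: "sqrt (LINT t:{0..1}|lborel. (s n t)\<^sup>2) = \<sigma> n" for n
      unfolding ssq \<sigma>_def V_def by (subst step_int(2)[OF part]) simp
    have hdef: "sqrt (LINT t:{0..1}|lborel. (h t)\<^sup>2) = \<Delta>" by (simp add: \<Delta>_def norm01_def)
    have up: "\<sigma> n \<le> \<Delta> + r n" for n
    proof -
      have "sqrt (LINT t:{0..1}|lborel. (h t + (s n t - h t))\<^sup>2)
          \<le> sqrt (LINT t:{0..1}|lborel. (h t)\<^sup>2) + sqrt (LINT t:{0..1}|lborel. (s n t - h t)\<^sup>2)"
        by (rule L2_triangle[OF hm _ hi]) (use sq_add_integrable[OF sm[of n], of "\<lambda>t. - h t" "{0..1}"] si hi in auto)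
      then show ?thesis using sint hdef by (simp add: r_def)
    qed
    have lo: "\<Delta> \<le> \<sigma> n + r n" for n
    proof -
      have eqr: "(\<lambda>t. (h t - s n t)\<^sup>2) = (\<lambda>t. (s n t - h t)\<^sup>2)" by (intro ext) (rule power2_commute)
      have "sqrt (LINT t:{0..1}|lborel. (s n t + (h t - s n t))\<^sup>2)
          \<le> sqrt (LINT t:{0..1}|lborel. (s n t)\<^sup>2) + sqrt (LINT t:{0..1}|lborel. (h t - s n t)\<^sup>2)"
        by (rule L2_triangle[OF sm _ si]) (use sq_add_integrable[OF hm, of "\<lambda>t. - s n t" "{0..1}"] si hi in auto)
      then show ?thesis using sint hdef eqr by (simp add: r_def)
    qed
    have r0: "r \<longlonglongrightarrow> 0"
      using tendsto_real_sqrt[OF conv] unfolding r_def s_def by simp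
    have \<sigma>lim: "\<sigma> \<longlonglongrightarrow> \<Delta>"
    proof (rule LIM_zero_cancel, rule Lim_null_comparison[OF _ r0])
      show "\<forall>\<^sub>F n in sequentially. norm (\<sigma> n - \<Delta>) \<le> r n"
        using up lo by (intro always_eventually allI) (simp add: abs_le_iff algebra_simps)
    qed
    have evpos: "\<forall>\<^sub>F n in sequentially. \<sigma> n > 0" by (rule order_tendstoD(1)[OF \<sigma>lim \<Delta>p])
    define p where "p = (\<lambda>n. measure M {\<omega> \<in> space M. \<bar>step_sum X (Ns n) (\<tau>s n) (cs n) \<omega> - I \<omega>\<bar> > \<epsilon> / 4})"
    have p0: "p \<longlonglongrightarrow> 0" unfolding p_def by (rule pconv) (use assms(11) in simp)
    have lim: "(\<lambda>n. 10 * \<epsilon> / \<sigma> n + p n) \<longlonglongrightarrow> 10 * \<epsilon> / \<Delta> + 0"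
      by (intro tendsto_add tendsto_divide tendsto_const \<sigma>lim p0) (use \<Delta>p in simp)
    have ev: "\<forall>\<^sub>F n in sequentially. measure M ?E \<le> 10 * \<epsilon> / \<sigma> n + p n"
      using evpos
    proof eventually_elim
      case (elim n)
      show ?case
        unfolding p_def \<sigma>_def V_def
        by (rule per_n_bound[OF assms(1,4,5,6,9) Im part assms(11,12)])
           (use elim in \<open>simp add: \<sigma>_def V_def\<close>)
    qed
    have main: "measure M ?E \<le> 10 * \<epsilon> / \<Delta>"
      using tendsto_le[OF trivial_limit_sequentially lim tendsto_const ev] by simp
    show ?thesis using goal le1 main False by simp
  qed
qed

end
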